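(* Under the same setting as Lemma 2.8 ($c\ge0$, $d\in\{0,1,2,\dots\}$, $\lambda>0$, $q=e^{-\lambda/N}$, $\mathsf{s}=e^{-\lambda}$, fixed integers $p\ge1$, $0\le i\le p$), as $N\to\infty$, $$\sum_{j=0}^{N-1}f_i^{(c,d)}(j)=\Big(\frac{N}{\lambda}\Big)^{p+1}\frac{1}{i!(p-i)!}\Big(\mathcal{B}_{i,0}+\mathcal{B}_{i,1}\frac{\lambda}{N}+O(N^{-2})\Big),$$ where $\mathcal{B}_{i,0}=\lambda\mathcal{A}_{i,0}$ and $\mathcal{B}_{i,1}=\lambda\big(\mathcal{A}^{(1)}_{i,1}+\mathcal{A}^{(2)}_{i,1}+\mathcal{A}^{(3)}_{i,1}\big)-\frac12(1-\mathsf{s}^{c+1})^i(1-\mathsf{s})^{p-i}\mathsf{s}^{p+c(p-i)}+\frac12(1-\mathsf{s}^c)^p\delta_{i,p}$.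
   Context: For real $x$ and integer $m\ge0$ define $\begin{bmatrix} x\\ m\end{bmatrix}_q=\prod_{k=1}^{m}\frac{1-q^{x-m+k}}{1-q^{k}}$. For real $y\ge0$, $f_i^{(c,d)}(y)=q^{(cN+d)(p-i)+py}\begin{bmatrix} cN+d+y\\ i\end{bmatrix}_q\begin{bmatrix} p-i+y\\ p-i\end{bmatrix}_q$. The constants are $\mathcal{A}_{i,0}=\mathsf{s}^{c(p-i)}\int_0^1\mathsf{s}^{pt}(1-\mathsf{s}^t)^{p-i}(1-\mathsf{s}^{c+t})^i\,dt$, $\mathcal{A}^{(1)}_{i,1}=\mathsf{s}^{c(p-i+1)}\frac{i(2d-i+1)}{2}\int_0^1\mathsf{s}^{(p+1)t}(1-\mathsf{s}^t)^{p-i}(1-\mathsf{s}^{c+t})^{i-1}\,dt$, $\mathcal{A}^{(2)}_{i,1}=\mathsf{s}^{c(p-i)}\frac{(p-i)(p-i+1)}{2}\int_0^1\mathsf{s}^{(p+1)t}(1-\mathsf{s}^t)^{p-i-1}(1-\mathsf{s}^{c+t})^{i}\,dt$, $\mathcal{A}^{(3)}_{i,1}=\frac{4di+2i^2+p-4dp-2ip+p^2}{4}\mathcal{A}_{i,0}$. $\delta$ is the Kronecker delta. *)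

theory Defs
  imports "HOL-Analysis.Analysis" "HOL-Library.Landau_Symbols"
begin

definition qbinom :: "real \<Rightarrow> real \<Rightarrow> nat \<Rightarrow> real" where
  "qbinom q x m = (\<Prod>k=1..m. (1 - q powr (x - real m + real k)) / (1 - q ^ k))"

definition fcd :: "real \<Rightarrow> nat \<Rightarrow> real \<Rightarrow> nat \<Rightarrow> nat \<Rightarrow> nat \<Rightarrow> real \<Rightarrow> real" where
  "fcd q N c d p i y =
     q powr ((c * real N + real d) * real (p - i) + real p * y)
     * qbinom q (c * real N + real d + y) i
     * qbinom q (real (p - i) + y) (p - i)"

definition A0 :: "real \<Rightarrow> real \<Rightarrow> nat \<Rightarrow> nat \<Rightarrow> real" where
  "A0 s c p i = s powr (c * real (p - i)) *
     integral {0..1} (\<lambda>t. s powr (real p * t) * (1 - s powr t) ^ (p - i) * (1 - s powr (c + t)) ^ i)"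

definition A1_1 :: "real \<Rightarrow> real \<Rightarrow> nat \<Rightarrow> nat \<Rightarrow> nat \<Rightarrow> real" where
  "A1_1 s c d p i = s powr (c * (real p - real i + 1)) *
     (real i * (2 * real d - real i + 1) / 2) *
     integral {0..1} (\<lambda>t. s powr ((real p + 1) * t) * (1 - s powr t) ^ (p - i) * (1 - s powr (c + t)) ^ (i - 1))"

definition A1_2 :: "real \<Rightarrow> real \<Rightarrow> nat \<Rightarrow> nat \<Rightarrow> real" where
  "A1_2 s c p i = s powr (c * real (p - i)) *
     (real (p - i) * (real (p - i) + 1) / 2) *
     integral {0..1} (\<lambda>t. s powr ((real p + 1) * t) * (1 - s powr t) ^ (p - i - 1) * (1 - s powr (c + t)) ^ i)"

definition A1_3 :: "real \<Rightarrow> real \<Rightarrow> nat \<Rightarrow> nat \<Rightarrow> nat \<Rightarrow> real" where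
  "A1_3 s c d p i = (4 * real d * real i + 2 * (real i)^2 + real p - 4 * real d * real p
       - 2 * real i * real p + (real p)^2) / 4 * A0 s c p i"

definition B0 :: "real \<Rightarrow> real \<Rightarrow> nat \<Rightarrow> nat \<Rightarrow> real" where
  "B0 lam c p i = lam * A0 (exp (-lam)) c p i"

definition B1 :: "real \<Rightarrow> real \<Rightarrow> nat \<Rightarrow> nat \<Rightarrow> nat \<Rightarrow> real" where
  "B1 lam c d p i = (let s = exp (-lam) in
     lam * (A1_1 s c d p i + A1_2 s c p i + A1_3 s c d p i)
     - 1/2 * (1 - s powr (c + 1)) ^ i * (1 - s) ^ (p - i) * s powr (real p + c * real (p - i))
     + 1/2 * (1 - s powr c) ^ p * (if i = p then 1 else 0))"

end

theory Submission
  imports Defs "HOL-Real_Asymp.Real_Asymp" "HOL-Computational_Algebra.Polynomial"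
begin


definition uexp :: "'a set \<Rightarrow> (real \<Rightarrow> 'a \<Rightarrow> real) \<Rightarrow> ('a \<Rightarrow> real) \<Rightarrow> ('a \<Rightarrow> real) \<Rightarrow> bool" where
  "uexp X f a b \<longleftrightarrow> (\<exists>M. \<forall>x\<in>X. \<bar>a x\<bar> \<le> M \<and> \<bar>b x\<bar> \<le> M) \<and>
     (\<exists>C. \<forall>\<^sub>F h in at_right 0. \<forall>x\<in>X. \<bar>f h x - a x - h * b x\<bar> \<le> C * h^2)"

lemma abs_mult_le: "\<bar>u\<bar> \<le> U \<Longrightarrow> \<bar>v\<bar> \<le> V \<Longrightarrow> \<bar>u * v\<bar> \<le> U * (V::real)"
  unfolding abs_mult by (rule mult_mono') auto

lemma ev_small: "\<forall>\<^sub>F h in at_right (0::real). 0 < h \<and> h < 1"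
  by (simp add: eventually_at_right_field) (rule exI[of _ 1], auto)

lemma uexp_cong:
  assumes "uexp X f a b" "\<And>x. x \<in> X \<Longrightarrow> a x = a' x" "\<And>x. x \<in> X \<Longrightarrow> b x = b' x"
    "\<And>h x. 0 < h \<Longrightarrow> x \<in> X \<Longrightarrow> f h x = f' h x"
  shows "uexp X f' a' b'"
proof -
  from assms(1) obtain M C where M: "\<forall>x\<in>X. \<bar>a x\<bar> \<le> M \<and> \<bar>b x\<bar> \<le> M"
    and C: "\<forall>\<^sub>F h in at_right 0. \<forall>x\<in>X. \<bar>f h x - a x - h * b x\<bar> \<le> C * h^2"
    unfolding uexp_def by blast
  have "\<forall>\<^sub>F h in at_right 0. \<forall>x\<in>X. \<bar>f' h x - a' x - h * b' x\<bar> \<le> C * h^2"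
    using C ev_small by eventually_elim (use assms in auto)
  moreover have "\<forall>x\<in>X. \<bar>a' x\<bar> \<le> M \<and> \<bar>b' x\<bar> \<le> M" using M assms(2,3) by auto
  ultimately show ?thesis unfolding uexp_def by blast
qed

lemma uexp_const:
  assumes "\<And>x. x \<in> X \<Longrightarrow> \<bar>a x\<bar> \<le> M"
  shows "uexp X (\<lambda>h x. a x) a (\<lambda>_. 0)"
proof -
  have "\<forall>x\<in>X. \<bar>a x\<bar> \<le> \<bar>M\<bar> \<and> \<bar>(0::real)\<bar> \<le> \<bar>M\<bar>" using assms by force
  moreover have "\<forall>\<^sub>F h in at_right 0. \<forall>x\<in>X. \<bar>a x - a x - h * 0\<bar> \<le> 0 * h^2" by simp
  ultimately show ?thesis unfolding uexp_def by blast
qed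

lemma uexp_mult:
  assumes f: "uexp X f a b" and g: "uexp X g c e"
  shows "uexp X (\<lambda>h x. f h x * g h x) (\<lambda>x. a x * c x) (\<lambda>x. a x * e x + b x * c x)"
proof -
  from f obtain M1 C1 where M1: "\<forall>x\<in>X. \<bar>a x\<bar> \<le> M1 \<and> \<bar>b x\<bar> \<le> M1"
    and C1: "\<forall>\<^sub>F h in at_right 0. \<forall>x\<in>X. \<bar>f h x - a x - h * b x\<bar> \<le> C1 * h^2"
    unfolding uexp_def by blast
  from g obtain M2 C2 where M2: "\<forall>x\<in>X. \<bar>c x\<bar> \<le> M2 \<and> \<bar>e x\<bar> \<le> M2"
    and C2: "\<forall>\<^sub>F h in at_right 0. \<forall>x\<in>X. \<bar>g h x - c x - h * e x\<bar> \<le> C2 * h^2"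
    unfolding uexp_def by blast
  define K where "K = M1 * M2 + 2 * M1 * \<bar>C2\<bar> + \<bar>C1\<bar> * (2 * M2) + \<bar>C1\<bar> * \<bar>C2\<bar>"
  have "\<forall>\<^sub>F h in at_right 0. \<forall>x\<in>X. \<bar>f h x * g h x - a x * c x - h * (a x * e x + b x * c x)\<bar> \<le> K * h^2"
    using C1 C2 ev_small
  proof eventually_elim
    case (elim h)
    show ?case
    proof
      fix x assume x: "x \<in> X"
      define F where "F = f h x - a x - h * b x"
      define G where "G = g h x - c x - h * e x"
      have "C1 * h^2 \<le> \<bar>C1\<bar> * h^2" by (rule mult_right_mono) auto
      moreover have "\<bar>F\<bar> \<le> C1 * h^2" using elim x unfolding F_def by blast
      ultimately have hF: "\<bar>F\<bar> \<le> \<bar>C1\<bar> * h^2" by linarith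
      have "C2 * h^2 \<le> \<bar>C2\<bar> * h^2" by (rule mult_right_mono) auto
      moreover have "\<bar>G\<bar> \<le> C2 * h^2" using elim x unfolding G_def by blast
      ultimately have hG: "\<bar>G\<bar> \<le> \<bar>C2\<bar> * h^2" by linarith
      have h2: "h^2 \<le> 1" using elim by (simp add: power_le_one)
      have "\<bar>C2\<bar> * h^2 \<le> \<bar>C2\<bar> * 1" by (rule mult_left_mono[OF h2]) simp
      then have hG1: "\<bar>G\<bar> \<le> \<bar>C2\<bar>" using hG by linarith
      have "\<bar>b x\<bar> \<le> M1" "\<bar>e x\<bar> \<le> M2" using M1 M2 x by auto
      have "h * \<bar>b x\<bar> \<le> 1 * \<bar>b x\<bar>" "h * \<bar>e x\<bar> \<le> 1 * \<bar>e x\<bar>"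
        using elim by (intro mult_right_mono; simp)+
      then have hb: "\<bar>h * b x\<bar> \<le> M1" and he: "\<bar>h * e x\<bar> \<le> M2"
        using elim \<open>\<bar>b x\<bar> \<le> M1\<close> \<open>\<bar>e x\<bar> \<le> M2\<close> by (simp_all add: abs_mult)
      have ab: "\<bar>a x + h * b x\<bar> \<le> 2 * M1" using M1[rule_format, OF x] hb abs_triangle_ineq[of "a x" "h * b x"] by linarith
      have ce: "\<bar>c x + h * e x\<bar> \<le> 2 * M2" using M2[rule_format, OF x] he abs_triangle_ineq[of "c x" "h * e x"] by linarith
      have eq: "f h x * g h x - a x * c x - h * (a x * e x + b x * c x)
          = h^2 * (b x * e x) + (a x + h * b x) * G + F * (c x + h * e x) + F * G"
        unfolding F_def G_def by (simp add: algebra_simps power2_eq_square)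
      have t1: "\<bar>h^2 * (b x * e x)\<bar> \<le> h^2 * (M1 * M2)"
        using M1 M2 x by (simp add: abs_mult mult_left_mono mult_mono')
      have t2: "\<bar>(a x + h * b x) * G\<bar> \<le> (2 * M1) * (\<bar>C2\<bar> * h^2)"
        by (rule abs_mult_le[OF ab hG])
      have t3: "\<bar>F * (c x + h * e x)\<bar> \<le> (\<bar>C1\<bar> * h^2) * (2 * M2)"
        by (rule abs_mult_le[OF hF ce])
      have t4: "\<bar>F * G\<bar> \<le> (\<bar>C1\<bar> * h^2) * \<bar>C2\<bar>"
        by (rule abs_mult_le[OF hF hG1])
      have "\<bar>f h x * g h x - a x * c x - h * (a x * e x + b x * c x)\<bar>
          \<le> h^2 * (M1 * M2) + (2 * M1) * (\<bar>C2\<bar> * h^2) + (\<bar>C1\<bar> * h^2) * (2 * M2) + (\<bar>C1\<bar> * h^2) * \<bar>C2\<bar>"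
        unfolding eq using t1 t2 t3 t4 by linarith
      also have "\<dots> = K * h^2" unfolding K_def by (simp add: algebra_simps)
      finally show "\<bar>f h x * g h x - a x * c x - h * (a x * e x + b x * c x)\<bar> \<le> K * h^2" .
    qed
  qed
  moreover have "\<forall>x\<in>X. \<bar>a x * c x\<bar> \<le> M1 * M2 + M1 * M2 + M1 * M2 \<and> \<bar>a x * e x + b x * c x\<bar> \<le> M1 * M2 + M1 * M2 + M1 * M2"
  proof
    fix x assume x: "x \<in> X"
    have "M1 \<ge> 0" "M2 \<ge> 0" using M1 M2 x by (auto intro: order_trans[OF abs_ge_zero])
    have "\<bar>a x * c x\<bar> \<le> M1 * M2" "\<bar>a x * e x\<bar> \<le> M1 * M2" "\<bar>b x * c x\<bar> \<le> M1 * M2"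
      using M1 M2 x abs_mult_le by blast+
    then show "\<bar>a x * c x\<bar> \<le> M1 * M2 + M1 * M2 + M1 * M2 \<and> \<bar>a x * e x + b x * c x\<bar> \<le> M1 * M2 + M1 * M2 + M1 * M2"
      using \<open>M1 \<ge> 0\<close> \<open>M2 \<ge> 0\<close> abs_triangle_ineq[of "a x * e x" "b x * c x"] mult_nonneg_nonneg[of M1 M2] by linarith
  qed
  ultimately show ?thesis unfolding uexp_def by blast
qed

lemma uexp_add:
  assumes f: "uexp X f a b" and g: "uexp X g c e"
  shows "uexp X (\<lambda>h x. f h x + g h x) (\<lambda>x. a x + c x) (\<lambda>x. b x + e x)"
proof -
  from f obtain M1 C1 where M1: "\<forall>x\<in>X. \<bar>a x\<bar> \<le> M1 \<and> \<bar>b x\<bar> \<le> M1"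
    and C1: "\<forall>\<^sub>F h in at_right 0. \<forall>x\<in>X. \<bar>f h x - a x - h * b x\<bar> \<le> C1 * h^2"
    unfolding uexp_def by blast
  from g obtain M2 C2 where M2: "\<forall>x\<in>X. \<bar>c x\<bar> \<le> M2 \<and> \<bar>e x\<bar> \<le> M2"
    and C2: "\<forall>\<^sub>F h in at_right 0. \<forall>x\<in>X. \<bar>g h x - c x - h * e x\<bar> \<le> C2 * h^2"
    unfolding uexp_def by blast
  have "\<forall>\<^sub>F h in at_right 0. \<forall>x\<in>X. \<bar>f h x + g h x - (a x + c x) - h * (b x + e x)\<bar> \<le> (C1 + C2) * h^2"
    using C1 C2
  proof eventually_elim
    case (elim h)
    show ?case
    proof
      fix x assume x: "x \<in> X"
      have eq: "f h x + g h x - (a x + c x) - h * (b x + e x) = (f h x - a x - h * b x) + (g h x - c x - h * e x)"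
        by (simp add: algebra_simps)
      have "\<bar>f h x - a x - h * b x\<bar> \<le> C1 * h^2" "\<bar>g h x - c x - h * e x\<bar> \<le> C2 * h^2" using elim x by auto
      then show "\<bar>f h x + g h x - (a x + c x) - h * (b x + e x)\<bar> \<le> (C1 + C2) * h^2"
        unfolding eq using abs_triangle_ineq[of "f h x - a x - h * b x" "g h x - c x - h * e x"]
        by (simp add: distrib_right)
    qed
  qed
  moreover have "\<forall>x\<in>X. \<bar>a x + c x\<bar> \<le> M1 + M2 \<and> \<bar>b x + e x\<bar> \<le> M1 + M2"
    using M1 M2 by force
  ultimately show ?thesis unfolding uexp_def by blast
qed



lemma uexp_prod_same:
  assumes "finite K" "\<And>k. k \<in> K \<Longrightarrow> uexp X (f k) A (\<lambda>x. c k * B x)"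
  shows "uexp X (\<lambda>h x. \<Prod>k\<in>K. f k h x) (\<lambda>x. A x ^ card K) (\<lambda>x. (\<Sum>k\<in>K. c k) * B x * A x ^ (card K - 1))"
  using assms
proof (induction K rule: finite_induct)
  case empty
  show ?case using uexp_const[of X "\<lambda>_. 1" 1] by simp
next
  case (insert k K)
  have m: "uexp X (\<lambda>h x. f k h x * (\<Prod>k\<in>K. f k h x)) (\<lambda>x. A x * A x ^ card K)
     (\<lambda>x. A x * ((\<Sum>k\<in>K. c k) * B x * A x ^ (card K - 1)) + c k * B x * A x ^ card K)"
    by (rule uexp_mult) (use insert in auto)
  show ?case
  proof (rule uexp_cong[OF m])
    fix x
    show "A x * A x ^ card K = A x ^ card (insert k K)" using insert by simp
    show "A x * ((\<Sum>k\<in>K. c k) * B x * A x ^ (card K - 1)) + c k * B x * A x ^ card K =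
      (\<Sum>k\<in>insert k K. c k) * B x * A x ^ (card (insert k K) - 1)"
    proof (cases "K = {}")
      case True then show ?thesis by simp
    next
      case False
      then have "card K \<ge> 1" using insert by (simp add: Suc_leI card_gt_0_iff)
      then have "A x * A x ^ (card K - 1) = A x ^ card K"
        by (metis Suc_diff_le diff_Suc_1 power_Suc)
      then show ?thesis using insert
        by (simp add: algebra_simps)
    qed
    fix h
    show "f k h x * (\<Prod>k\<in>K. f k h x) = (\<Prod>k\<in>insert k K. f k h x)" using insert by simp
  qed
qed

lemma uexp_sum:
  assumes "finite K" "\<And>k. k \<in> K \<Longrightarrow> uexp X (f k) (a k) (b k)"
  shows "uexp X (\<lambda>h x. \<Sum>k\<in>K. f k h x) (\<lambda>x. \<Sum>k\<in>K. a k x) (\<lambda>x. \<Sum>k\<in>K. b k x)"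
  using assms
proof (induction K rule: finite_induct)
  case empty
  show ?case using uexp_const[of X "\<lambda>_. 0" 0] by simp
next
  case (insert k K)
  have m: "uexp X (\<lambda>h x. f k h x + (\<Sum>k\<in>K. f k h x)) (\<lambda>x. a k x + (\<Sum>k\<in>K. a k x)) (\<lambda>x. b k x + (\<Sum>k\<in>K. b k x))"
    by (rule uexp_add) (use insert in auto)
  show ?case by (rule uexp_cong[OF m]) (use insert in auto)
qed

lemma uexp_compose:
  assumes "uexp X f a b" "g ` Y \<subseteq> X"
  shows "uexp Y (\<lambda>h y. f h (g y)) (\<lambda>y. a (g y)) (\<lambda>y. b (g y))"
proof -
  from assms(1) obtain M C where M: "\<forall>x\<in>X. \<bar>a x\<bar> \<le> M \<and> \<bar>b x\<bar> \<le> M"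
    and C: "\<forall>\<^sub>F h in at_right 0. \<forall>x\<in>X. \<bar>f h x - a x - h * b x\<bar> \<le> C * h^2"
    unfolding uexp_def by blast
  have "\<forall>\<^sub>F h in at_right 0. \<forall>y\<in>Y. \<bar>f h (g y) - a (g y) - h * b (g y)\<bar> \<le> C * h^2"
    using C by eventually_elim (use assms(2) in blast)
  moreover have "\<forall>y\<in>Y. \<bar>a (g y)\<bar> \<le> M \<and> \<bar>b (g y)\<bar> \<le> M" using M assms(2) by blast
  ultimately show ?thesis unfolding uexp_def by blast
qed

lemma uexp_exp_atom: "uexp X (\<lambda>h x. exp (- (h * a))) (\<lambda>_. 1) (\<lambda>_. - a)"
proof -
  have "(\<lambda>y::real. exp(-y) - 1 + y) \<in> O[at 0](\<lambda>y. y^2)" by real_asymp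
  then obtain C where C: "C > 0" "\<forall>\<^sub>F y::real in at 0. norm (exp(-y) - 1 + y) \<le> C * norm (y^2)"
    by (elim landau_o.bigE)
  then obtain d where d: "d > 0" "\<And>y. y \<noteq> 0 \<Longrightarrow> dist y 0 < d \<Longrightarrow> \<bar>exp(-y) - 1 + y\<bar> \<le> C * y^2"
    unfolding eventually_at by auto
  have "\<forall>\<^sub>F h in at_right 0. \<forall>x\<in>X. \<bar>exp (- (h * a)) - 1 - h * (- a)\<bar> \<le> (C * a^2) * h^2"
    unfolding eventually_at_right_field
  proof (intro exI[of _ "d / (\<bar>a\<bar> + 1)"] conjI allI impI ballI)
    show "0 < d / (\<bar>a\<bar> + 1)" using d by simp
    fix h x assume h: "0 < h" "h < d / (\<bar>a\<bar> + 1)"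
    show "\<bar>exp (- (h * a)) - 1 - h * (- a)\<bar> \<le> (C * a^2) * h^2"
    proof (cases "h * a = 0")
      case True then have "h * a = 0" by simp
      have "exp (- (h * a)) - 1 - h * (- a) = exp (- (h * a)) - 1 + (h * a)" by simp
      also have "\<dots> = 0" unfolding \<open>h * a = 0\<close> by simp
      finally have "exp (- (h * a)) - 1 - h * (- a) = 0" .
      moreover have "0 \<le> (C * a^2) * h^2" using C by simp
      ultimately show ?thesis by simp
    next
      case False
      have "\<bar>h * a\<bar> \<le> h * (\<bar>a\<bar> + 1)" using h by (simp add: abs_mult)
      also have "\<dots> < d" using h by (simp add: field_simps)
      finally have "dist (h * a) 0 < d" by simp
      from d(2)[OF False this] show ?thesis by (simp add: power_mult_distrib algebra_simps)
    qed
  qed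
  moreover have "\<forall>x\<in>X. \<bar>(\<lambda>_. 1::real) x\<bar> \<le> 1 + \<bar>a\<bar> \<and> \<bar>(\<lambda>_. - a) x\<bar> \<le> 1 + \<bar>a\<bar>" by simp
  ultimately show ?thesis unfolding uexp_def by blast
qed

lemma uexp_w_atom:
  assumes k: "k > 0"
  shows "uexp X (\<lambda>h x. (h * k) / (1 - exp (- (h * k)))) (\<lambda>_. 1) (\<lambda>_. k / 2)"
proof -
  have "(\<lambda>y::real. y/(1-exp(-y)) - 1 - y/2) \<in> O[at_right 0](\<lambda>y. y^2)" by real_asymp
  then obtain C where C: "C > 0" "\<forall>\<^sub>F y::real in at_right 0. norm (y/(1-exp(-y)) - 1 - y/2) \<le> C * norm (y^2)"
    by (elim landau_o.bigE)
  then obtain d where d: "d > 0" "\<And>y. 0 < y \<Longrightarrow> y < d \<Longrightarrow> \<bar>y/(1-exp(-y)) - 1 - y/2\<bar> \<le> C * y^2"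
    unfolding eventually_at_right_field by auto
  have "\<forall>\<^sub>F h in at_right 0. \<forall>x\<in>X. \<bar>(h * k) / (1 - exp (- (h * k))) - 1 - h * (k / 2)\<bar> \<le> (C * k^2) * h^2"
    unfolding eventually_at_right_field
  proof (intro exI[of _ "d / k"] conjI allI impI ballI)
    show "0 < d / k" using d k by simp
    fix h x assume h: "0 < h" "h < d / k"
    have "0 < h * k" "h * k < d" using h k by (auto simp: field_simps)
    from d(2)[OF this] show "\<bar>(h * k) / (1 - exp (- (h * k))) - 1 - h * (k / 2)\<bar> \<le> (C * k^2) * h^2"
      by (simp add: power_mult_distrib algebra_simps)
  qed
  moreover have "\<forall>x\<in>X. \<bar>(\<lambda>_. 1::real) x\<bar> \<le> 1 + \<bar>k\<bar> \<and> \<bar>(\<lambda>_. k/2) x\<bar> \<le> 1 + \<bar>k\<bar>" by simp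
  ultimately show ?thesis unfolding uexp_def by blast
qed

definition sexp :: "(real \<Rightarrow> real) \<Rightarrow> real \<Rightarrow> real \<Rightarrow> bool" where
  "sexp f a b \<longleftrightarrow> (\<exists>C. \<forall>\<^sub>F h in at_right 0. \<bar>f h - a - h * b\<bar> \<le> C * h^2)"

lemma sexp_uexp: "sexp f a b \<longleftrightarrow> uexp (UNIV::unit set) (\<lambda>h _. f h) (\<lambda>_. a) (\<lambda>_. b)"
proof
  assume "sexp f a b"
  then obtain C where C: "\<forall>\<^sub>F h in at_right 0. \<bar>f h - a - h * b\<bar> \<le> C * h^2" unfolding sexp_def by blast
  show "uexp (UNIV::unit set) (\<lambda>h _. f h) (\<lambda>_. a) (\<lambda>_. b)" unfolding uexp_def
  proof (intro conjI)
    show "\<exists>M. \<forall>x\<in>(UNIV::unit set). \<bar>a\<bar> \<le> M \<and> \<bar>b\<bar> \<le> M" by (intro exI[of _ "\<bar>a\<bar>+\<bar>b\<bar>"]) auto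
    show "\<exists>C. \<forall>\<^sub>F h in at_right 0. \<forall>x\<in>(UNIV::unit set). \<bar>f h - a - h * b\<bar> \<le> C * h^2"
      using C by (intro exI[of _ C]) (auto elim: eventually_mono)
  qed
next
  assume "uexp (UNIV::unit set) (\<lambda>h _. f h) (\<lambda>_. a) (\<lambda>_. b)"
  then show "sexp f a b" unfolding sexp_def uexp_def by auto
qed

lemma uexp_point: "uexp X f a b \<Longrightarrow> x0 \<in> X \<Longrightarrow> sexp (\<lambda>h. f h x0) (a x0) (b x0)"
  unfolding sexp_def uexp_def by (auto elim!: eventually_mono)

lemma sexp_mult: "sexp f a b \<Longrightarrow> sexp g c e \<Longrightarrow> sexp (\<lambda>h. f h * g h) (a * c) (a * e + b * c)"
  unfolding sexp_uexp by (drule (1) uexp_mult) simp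

lemma sexp_add: "sexp f a b \<Longrightarrow> sexp g c e \<Longrightarrow> sexp (\<lambda>h. f h + g h) (a + c) (b + e)"
  unfolding sexp_uexp by (drule (1) uexp_add) simp

lemma sexp_const: "sexp (\<lambda>h. a) a 0"
  unfolding sexp_def by (auto intro!: exI[of _ 0])

lemma sexp_id: "sexp (\<lambda>h. h * a) 0 a"
  unfolding sexp_def by (auto intro!: exI[of _ 0])

lemma sexp_cong: "sexp f a b \<Longrightarrow> a = a' \<Longrightarrow> b = b' \<Longrightarrow> (\<And>h. 0 < h \<Longrightarrow> f h = f' h) \<Longrightarrow> sexp f' a' b'"
proof -
  assume a: "sexp f a b" "a = a'" "b = b'" "\<And>h. 0 < h \<Longrightarrow> f h = f' h"
  from a(1) obtain C where C: "\<forall>\<^sub>F h in at_right 0. \<bar>f h - a - h * b\<bar> \<le> C * h^2" unfolding sexp_def by blast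
  have "\<forall>\<^sub>F h in at_right 0. \<bar>f' h - a' - h * b'\<bar> \<le> C * h^2"
    using C ev_small by eventually_elim (use a in auto)
  then show ?thesis unfolding sexp_def by blast
qed

lemma sexp_bounded_mult:
  assumes "\<forall>\<^sub>F h in at_right 0. \<bar>u h\<bar> \<le> M" "sexp v 0 0"
  shows "sexp (\<lambda>h. u h * v h) 0 0"
proof -
  from assms(2) obtain C where C: "\<forall>\<^sub>F h in at_right 0. \<bar>v h\<bar> \<le> C * h^2" unfolding sexp_def by auto
  have "\<forall>\<^sub>F h in at_right 0. \<bar>u h * v h - 0 - h * 0\<bar> \<le> (M * C) * h^2"
    using assms(1) C by eventually_elim (simp, metis abs_mult_le mult.assoc)
  then show ?thesis unfolding sexp_def by blast
qed

lemma uexp_integral: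
  fixes f :: "real \<Rightarrow> real \<Rightarrow> real" and A B :: "real \<Rightarrow> real"
  assumes u: "uexp {0..1} f A B" and cf: "\<And>h. 0 < h \<Longrightarrow> continuous_on {0..1} (f h)"
    and cA: "continuous_on {0..1} A" and cB: "continuous_on {0..1} B"
  shows "sexp (\<lambda>h. integral {0..1} (f h)) (integral {0..1} A) (integral {0..1} B)"
proof -
  from u obtain C where C: "\<forall>\<^sub>F h in at_right 0. \<forall>x\<in>{0..1}. \<bar>f h x - A x - h * B x\<bar> \<le> C * h^2"
    unfolding uexp_def by blast
  have "\<forall>\<^sub>F h in at_right 0. \<bar>integral {0..1} (f h) - integral {0..1} A - h * integral {0..1} B\<bar> \<le> C * h^2"
    using C ev_small
  proof eventually_elim
    case (elim h)
    have i1: "f h integrable_on {0..1}" using cf[of h] elim by (auto intro: integrable_continuous_real)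
    have i2: "A integrable_on {0..1}" "B integrable_on {0..1}" using cA cB by (simp_all add: integrable_continuous_real)
    have i3: "(\<lambda>x. h * B x) integrable_on {0..1}" using i2(2) by (rule integrable_on_mult_right)
    have eq: "integral {0..1} (f h) - integral {0..1} A - h * integral {0..1} B
        = integral {0..1} (\<lambda>x. f h x - A x - h * B x)"
      using i1 i2 i3 by (simp add: integral_diff integrable_diff)
    have "norm (integral {0..1} (\<lambda>x. f h x - A x - h * B x)) \<le> integral {0..1} (\<lambda>x::real. C * h^2)"
      by (rule integral_norm_bound_integral) (use i1 i2 i3 elim in \<open>auto intro!: integrable_diff\<close>)
    then show ?case unfolding eq by simp
  qed
  then show ?thesis unfolding sexp_def by blast
qed



lemma uexp_lin_atom:
  assumes "\<And>x. x \<in> X \<Longrightarrow> \<bar>g x\<bar> \<le> M"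
  shows "uexp X (\<lambda>h x. 1 - g x * exp (- (h * a))) (\<lambda>x. 1 - g x) (\<lambda>x. a * g x)"
proof -
  have "\<And>x. x \<in> X \<Longrightarrow> \<bar>- g x\<bar> \<le> M" using assms by simp
  from uexp_mult[OF uexp_const[of X "\<lambda>x. - g x", OF this] uexp_exp_atom[of X a]]
  have m: "uexp X (\<lambda>h x. - g x * exp (- (h * a))) (\<lambda>x. - g x * 1) (\<lambda>x. - g x * - a + 0 * 1)" .
  have c1: "uexp X (\<lambda>h x. 1) (\<lambda>x. 1) (\<lambda>_. 0)" by (rule uexp_const[of _ _ 1]) simp
  show ?thesis by (rule uexp_cong[OF uexp_add[OF c1 m]]) auto
qed

lemma Q1_helper: "1 * (b * X) * P * (Sg * x * R) + (1 * (b * X) * (Sa * y * P') + (1 * 0 + - D * (b * X)) * P) * Q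
   = b * X * (- D * P * Q + Sa * y * P' * Q + Sg * x * R * P)" for b X P Sg x R Sa y P' D Q :: real
  by (simp add: algebra_simps)

locale LL =
  fixes c lam :: real and d p i :: nat
  assumes c: "c \<ge> 0" and lam: "lam > 0" and p: "p \<ge> 1" and ip: "i \<le> p"
begin

definition s where "s = exp (- lam)"
definition al :: "real \<Rightarrow> nat \<Rightarrow> real" where "al h k = s powr c * exp (- (h * (real d - real i + real k)))"
definition ga :: "real \<Rightarrow> nat \<Rightarrow> real" where "ga h k = exp (- (h * real k))"
definition be :: "real \<Rightarrow> real" where "be h = exp (- (h * (real d * real (p - i)))) * s powr (c * real (p - i))"
definition Qf :: "real \<Rightarrow> real \<Rightarrow> real" where
  "Qf h x = be h * x ^ p * (\<Prod>k\<in>{1..i}. 1 - al h k * x) * (\<Prod>k\<in>{1..p-i}. 1 - ga h k * x)"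
definition Qp :: "real \<Rightarrow> real poly" where
  "Qp h = smult (be h) (monom 1 p * (\<Prod>k\<in>{1..i}. [:1, - al h k:]) * (\<Prod>k\<in>{1..p-i}. [:1, - ga h k:]))"
definition Sa :: real where "Sa = (\<Sum>k\<in>{1..i}. real d - real i + real k)"
definition Sg :: real where "Sg = (\<Sum>k\<in>{1..p-i}. real k)"
definition Q0 :: "real \<Rightarrow> real" where
  "Q0 x = s powr (c * real (p - i)) * x ^ p * (1 - s powr c * x) ^ i * (1 - x) ^ (p - i)"
definition Q1 :: "real \<Rightarrow> real" where
  "Q1 x = s powr (c * real (p - i)) * x ^ p *
     (- (real d * real (p - i)) * (1 - s powr c * x) ^ i * (1 - x) ^ (p - i)
      + Sa * (s powr c * x) * (1 - s powr c * x) ^ (i - 1) * (1 - x) ^ (p - i)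
      + Sg * x * (1 - x) ^ (p - i - 1) * (1 - s powr c * x) ^ i)"

lemma s_pos: "s > 0" and s_less1: "s < 1" unfolding s_def using lam by auto

lemma poly_Qp: "poly (Qp h) x = Qf h x"
  unfolding Qp_def Qf_def by (simp add: poly_prod poly_monom algebra_simps)

lemma Qf0: "Qf 0 x = Q0 x"
  unfolding Qf_def Q0_def be_def al_def ga_def by simp

lemma spc_le1: "s powr c \<le> 1" and spc_pos: "s powr c > 0"
  using s_pos s_less1 c by (auto intro: powr_le1)

lemma uexp_Qf: "uexp {0..1} Qf Q0 Q1"
proof -
  let ?X = "{0..1::real}"
  let ?b0 = "s powr (c * real (p - i))"
  have b0: "\<bar>?b0\<bar> \<le> 1" using s_pos s_less1 c by (simp add: powr_le1)
  have "\<And>x. x \<in> ?X \<Longrightarrow> \<bar>?b0 * x ^ p\<bar> \<le> 1"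
    using b0 by (simp add: abs_mult power_le_one mult_le_one)
  from uexp_mult[OF uexp_exp_atom[of ?X "real d * real (p - i)"] uexp_const[OF this]]
  have F1: "uexp ?X (\<lambda>h x. exp (- (h * (real d * real (p - i)))) * (?b0 * x ^ p))
     (\<lambda>x. 1 * (?b0 * x ^ p)) (\<lambda>x. 1 * 0 + - (real d * real (p - i)) * (?b0 * x ^ p))" .
  have F2: "uexp ?X (\<lambda>h x. \<Prod>k\<in>{1..i}. 1 - (s powr c * x) * exp (- (h * (real d - real i + real k))))
     (\<lambda>x. (1 - s powr c * x) ^ card {1..i}) (\<lambda>x. Sa * (s powr c * x) * (1 - s powr c * x) ^ (card {1..i} - 1))"
    unfolding Sa_def
  proof (rule uexp_prod_same)
    fix k
    have "\<And>x. x \<in> ?X \<Longrightarrow> \<bar>s powr c * x\<bar> \<le> 1" using spc_le1 spc_pos by (simp add: abs_mult mult_le_one)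
    from uexp_lin_atom[OF this]
    show "uexp ?X (\<lambda>h x. 1 - (s powr c * x) * exp (- (h * (real d - real i + real k))))
      (\<lambda>x. 1 - s powr c * x) (\<lambda>x. (real d - real i + real k) * (s powr c * x))" .
  qed simp
  have F3: "uexp ?X (\<lambda>h x. \<Prod>k\<in>{1..p-i}. 1 - x * exp (- (h * real k)))
     (\<lambda>x. (1 - x) ^ card {1..p-i}) (\<lambda>x. Sg * x * (1 - x) ^ (card {1..p-i} - 1))"
    unfolding Sg_def
  proof (rule uexp_prod_same)
    fix k
    have "\<And>x. x \<in> ?X \<Longrightarrow> \<bar>x\<bar> \<le> 1" by simp
    from uexp_lin_atom[OF this]
    show "uexp ?X (\<lambda>h x. 1 - x * exp (- (h * real k))) (\<lambda>x. 1 - x) (\<lambda>x. real k * x)" .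
  qed simp
  show ?thesis
  proof (rule uexp_cong[OF uexp_mult[OF uexp_mult[OF F1 F2] F3]])
    fix x
    show "1 * (?b0 * x ^ p) * (1 - s powr c * x) ^ card {1..i} * (1 - x) ^ card {1..p - i} = Q0 x"
      unfolding Q0_def by simp
    show "1 * (?b0 * x ^ p) * (1 - s powr c * x) ^ card {1..i} * (Sg * x * (1 - x) ^ (card {1..p - i} - 1)) +
          (1 * (?b0 * x ^ p) * (Sa * (s powr c * x) * (1 - s powr c * x) ^ (card {1..i} - 1)) +
           (1 * 0 + - (real d * real (p - i)) * (?b0 * x ^ p)) * (1 - s powr c * x) ^ card {1..i}) *
          (1 - x) ^ card {1..p - i} = Q1 x"
      unfolding Q1_def card_atLeastAtMost diff_Suc_1 by (rule Q1_helper)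
    fix h
    show "exp (- (h * (real d * real (p - i)))) * (?b0 * x ^ p) *
         (\<Prod>k\<in>{1..i}. 1 - s powr c * x * exp (- (h * (real d - real i + real k)))) *
         (\<Prod>k\<in>{1..p - i}. 1 - x * exp (- (h * real k))) = Qf h x"
      unfolding Qf_def be_def al_def ga_def by (simp add: algebra_simps)
  qed
qed

end


lemma coeff_bound_mult_lin:
  fixes P :: "real poly"
  assumes "\<And>m. \<bar>coeff P m\<bar> \<le> M"
  shows "\<bar>coeff (P * [:a, b:]) m\<bar> \<le> M * (\<bar>a\<bar> + \<bar>b\<bar>)"
proof -
  have M0: "M \<ge> 0" using assms[of 0] by linarith
  have eq: "coeff (P * [:a, b:]) m = a * coeff P m + (case m of 0 \<Rightarrow> 0 | Suc n \<Rightarrow> b * coeff P n)"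
    by (simp add: coeff_pCons split: nat.split)
  have "\<bar>a * coeff P m\<bar> \<le> \<bar>a\<bar> * M" using assms[of m] by (simp add: abs_mult mult_left_mono)
  moreover have "\<bar>(case m of 0 \<Rightarrow> 0 | Suc n \<Rightarrow> b * coeff P n)\<bar> \<le> \<bar>b\<bar> * M"
  proof (cases m)
    case 0 then show ?thesis using M0 by simp
  next
    case (Suc n) then show ?thesis using assms[of n] by (simp add: abs_mult mult_left_mono)
  qed
  ultimately show ?thesis unfolding eq
    using abs_triangle_ineq[of "a * coeff P m" "(case m of 0 \<Rightarrow> 0 | Suc n \<Rightarrow> b * coeff P n)"]
    by (simp add: algebra_simps)
qed

lemma coeff_bound_prod_lin:
  fixes a b :: "nat \<Rightarrow> real"
  assumes "finite K"
  shows "\<bar>coeff (\<Prod>k\<in>K. [:a k, b k:]) m\<bar> \<le> (\<Prod>k\<in>K. \<bar>a k\<bar> + \<bar>b k\<bar>)"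
  using assms
proof (induction K arbitrary: m rule: finite_induct)
  case empty
  then show ?case by (simp add: coeff_1)
next
  case (insert k K)
  have "\<bar>coeff ((\<Prod>k\<in>K. [:a k, b k:]) * [:a k, b k:]) m\<bar> \<le> (\<Prod>k\<in>K. \<bar>a k\<bar> + \<bar>b k\<bar>) * (\<bar>a k\<bar> + \<bar>b k\<bar>)"
    by (rule coeff_bound_mult_lin) (rule insert.IH)
  then show ?case using insert by (simp add: mult.commute)
qed

lemma coeff_bound_mult_prod:
  fixes a b :: "nat \<Rightarrow> real" and P :: "real poly"
  assumes "finite K" "\<And>m. \<bar>coeff P m\<bar> \<le> M"
  shows "\<bar>coeff (P * (\<Prod>k\<in>K. [:a k, b k:])) m\<bar> \<le> M * (\<Prod>k\<in>K. \<bar>a k\<bar> + \<bar>b k\<bar>)"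
  using assms(1)
proof (induction K arbitrary: m rule: finite_induct)
  case empty
  then show ?case using assms(2) by simp
next
  case (insert k K)
  have "\<bar>coeff ((P * (\<Prod>k\<in>K. [:a k, b k:])) * [:a k, b k:]) m\<bar> \<le> (M * (\<Prod>k\<in>K. \<bar>a k\<bar> + \<bar>b k\<bar>)) * (\<bar>a k\<bar> + \<bar>b k\<bar>)"
    by (rule coeff_bound_mult_lin) (rule insert.IH)
  then show ?case using insert by (simp add: algebra_simps)
qed

lemma poly_sum_from1:
  fixes P :: "real poly"
  assumes "degree P \<le> n" "coeff P 0 = 0"
  shows "poly P x = (\<Sum>m\<in>{1..n}. coeff P m * x ^ m)"
proof -
  have "poly P x = poly (\<Sum>m\<le>n. monom (coeff P m) m) x"
    using poly_as_sum_of_monoms'[OF assms(1)] by simp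
  also have "\<dots> = (\<Sum>m\<le>n. coeff P m * x ^ m)" by (simp add: poly_sum poly_monom)
  also have "{..n} = insert 0 {1..n}" by auto
  also have "(\<Sum>m\<in>insert 0 {1..n}. coeff P m * x ^ m) = (\<Sum>m\<in>{1..n}. coeff P m * x ^ m)"
    using assms(2) by (subst sum.insert) auto
  finally show ?thesis .
qed

context LL
begin

lemma degree_Qp: "degree (Qp h) \<le> 2 * p"
proof -
  have d1: "degree (\<Prod>k\<in>{1..i}. [:1, - al h k:]) \<le> i"
  proof -
    have "degree (\<Prod>k\<in>{1..i}. [:1, - al h k:]) \<le> (\<Sum>k\<in>{1..i}. degree [:1, - al h k:])"
      using degree_prod_sum_le[of "{1..i}" "\<lambda>k. [:1, - al h k:]"] by (simp add: o_def)
    also have "\<dots> \<le> (\<Sum>k\<in>{1..i}. 1)" by (intro sum_mono) simp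
    finally show ?thesis by simp
  qed
  have d2: "degree (\<Prod>k\<in>{1..p-i}. [:1, - ga h k:]) \<le> p - i"
  proof -
    have "degree (\<Prod>k\<in>{1..p-i}. [:1, - ga h k:]) \<le> (\<Sum>k\<in>{1..p-i}. degree [:1, - ga h k:])"
      using degree_prod_sum_le[of "{1..p-i}" "\<lambda>k. [:1, - ga h k:]"] by (simp add: o_def)
    also have "\<dots> \<le> (\<Sum>k\<in>{1..p-i}. 1)" by (intro sum_mono) simp
    finally show ?thesis by simp
  qed
  have "degree (Qp h) \<le> degree (monom (1::real) p * (\<Prod>k\<in>{1..i}. [:1, - al h k:]) * (\<Prod>k\<in>{1..p-i}. [:1, - ga h k:]))"
    unfolding Qp_def by (rule degree_smult_le)
  also have "\<dots> \<le> degree (monom (1::real) p * (\<Prod>k\<in>{1..i}. [:1, - al h k:])) + degree (\<Prod>k\<in>{1..p-i}. [:1, - ga h k:])"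
    by (rule degree_mult_le)
  also have "\<dots> \<le> (degree (monom (1::real) p) + degree (\<Prod>k\<in>{1..i}. [:1, - al h k:])) + degree (\<Prod>k\<in>{1..p-i}. [:1, - ga h k:])"
    using degree_mult_le by (intro add_right_mono) blast
  also have "\<dots> \<le> (p + i) + (p - i)" using d1 d2 by (intro add_mono) (auto simp: degree_monom_le)
  finally show ?thesis using ip by simp
qed

lemma coeff0_Qp: "coeff (Qp h) 0 = 0"
  unfolding Qp_def using p by (simp add: coeff_mult_0)

lemma poly_Qp_sum: "Qf h x = (\<Sum>m\<in>{1..2*p}. coeff (Qp h) m * x ^ m)"
  using poly_sum_from1[OF degree_Qp coeff0_Qp] poly_Qp by metis

definition Mc :: real where
  "Mc = (\<Prod>k\<in>{1..i}. 1 + exp \<bar>real d - real i + real k\<bar>) * (\<Prod>k\<in>{1..p-i}. 1 + 1)"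

lemma coeff_Qp_bound:
  assumes h: "0 < h" "h < 1"
  shows "\<bar>coeff (Qp h) m\<bar> \<le> Mc"
proof -
  have be1: "\<bar>be h\<bar> \<le> 1"
  proof -
    have "exp (- (h * (real d * real (p - i)))) \<le> 1" using h by simp
    moreover have "s powr (c * real (p - i)) \<le> 1" using s_pos s_less1 c by (simp add: powr_le1)
    ultimately show ?thesis unfolding be_def using s_pos
      by (simp add: abs_mult mult_le_one)
  qed
  have al1: "\<bar>1::real\<bar> + \<bar>- al h k\<bar> \<le> 1 + exp \<bar>real d - real i + real k\<bar>" for k
  proof -
    have "- (h * (real d - real i + real k)) \<le> \<bar>real d - real i + real k\<bar>"
    proof -
      have "\<bar>h * (real d - real i + real k)\<bar> \<le> \<bar>real d - real i + real k\<bar>"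
        using h by (simp add: abs_mult) (rule mult_left_le_one_le; simp)
      then show ?thesis using abs_ge_minus_self[of "h * (real d - real i + real k)"] by linarith
    qed
    then have "exp (- (h * (real d - real i + real k))) \<le> exp \<bar>real d - real i + real k\<bar>" by simp
    moreover have "s powr c \<le> 1" "s powr c \<ge> 0" using spc_le1 spc_pos by auto
    ultimately have "s powr c * exp (- (h * (real d - real i + real k))) \<le> exp \<bar>real d - real i + real k\<bar>"
      by (metis exp_ge_zero mult_left_le_one_le order_trans)
    then show ?thesis unfolding al_def using spc_pos by (simp add: abs_mult)
  qed
  have ga1: "\<bar>1::real\<bar> + \<bar>- ga h k\<bar> \<le> 1 + 1" for k
    unfolding ga_def using h by simp
  have m0: "\<bar>coeff (monom (1::real) p) m\<bar> \<le> 1" for m by simp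
  have c1: "\<bar>coeff (monom 1 p * (\<Prod>k\<in>{1..i}. [:1, - al h k:])) m\<bar> \<le> 1 * (\<Prod>k\<in>{1..i}. \<bar>1::real\<bar> + \<bar>- al h k\<bar>)" for m
    by (rule coeff_bound_mult_prod[OF _ m0]) simp
  have c2: "\<bar>coeff (monom 1 p * (\<Prod>k\<in>{1..i}. [:1, - al h k:]) * (\<Prod>k\<in>{1..p-i}. [:1, - ga h k:])) m\<bar>
     \<le> (1 * (\<Prod>k\<in>{1..i}. \<bar>1::real\<bar> + \<bar>- al h k\<bar>)) * (\<Prod>k\<in>{1..p-i}. \<bar>1::real\<bar> + \<bar>- ga h k\<bar>)"
    by (rule coeff_bound_mult_prod[OF _ c1]) simp
  have p1: "(\<Prod>k\<in>{1..i}. \<bar>1::real\<bar> + \<bar>- al h k\<bar>) \<le> (\<Prod>k\<in>{1..i}. 1 + exp \<bar>real d - real i + real k\<bar>)"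
    by (rule prod_mono) (use al1 in auto)
  have p2: "(\<Prod>k\<in>{1..p-i}. \<bar>1::real\<bar> + \<bar>- ga h k\<bar>) \<le> (\<Prod>k\<in>{1..p-i}. 1 + 1)"
    by (rule prod_mono) (use ga1 in auto)
  have nn1: "0 \<le> (\<Prod>k\<in>{1..i}. \<bar>1::real\<bar> + \<bar>- al h k\<bar>)" "0 \<le> (\<Prod>k\<in>{1..p-i}. \<bar>1::real\<bar> + \<bar>- ga h k\<bar>)"
    by (auto intro: prod_nonneg)
  have "(1 * (\<Prod>k\<in>{1..i}. \<bar>1::real\<bar> + \<bar>- al h k\<bar>)) * (\<Prod>k\<in>{1..p-i}. \<bar>1::real\<bar> + \<bar>- ga h k\<bar>) \<le> Mc"
    unfolding Mc_def using p1 p2 nn1 by (simp add: mult_mono)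
  with c2 have c3: "\<bar>coeff (monom 1 p * (\<Prod>k\<in>{1..i}. [:1, - al h k:]) * (\<Prod>k\<in>{1..p-i}. [:1, - ga h k:])) m\<bar> \<le> Mc"
    by linarith
  have "\<bar>coeff (Qp h) m\<bar> = \<bar>be h\<bar> * \<bar>coeff (monom 1 p * (\<Prod>k\<in>{1..i}. [:1, - al h k:]) * (\<Prod>k\<in>{1..p-i}. [:1, - ga h k:])) m\<bar>"
    unfolding Qp_def by (simp add: abs_mult)
  also have "\<dots> \<le> 1 * Mc" using be1 c3 by (intro mult_mono) auto
  finally show ?thesis by simp
qed

end


lemma prod_h_k: "(\<Prod>k\<in>{1..n}. h * real k) = h ^ n * fact n"
  by (induction n) (simp_all add: prod.nat_ivl_Suc' algebra_simps)

context LL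
begin

definition Dd :: "real \<Rightarrow> real" where
  "Dd h = (\<Prod>k\<in>{1..i}. 1 - exp (- (h * real k))) * (\<Prod>k\<in>{1..p-i}. 1 - exp (- (h * real k)))"
definition Wf :: "real \<Rightarrow> real" where
  "Wf h = (\<Prod>k\<in>{1..i}. (h * real k) / (1 - exp (- (h * real k)))) *
          (\<Prod>k\<in>{1..p-i}. (h * real k) / (1 - exp (- (h * real k))))"
definition Vf :: "real \<Rightarrow> real" where
  "Vf h = (\<Sum>m\<in>{1..2*p}. coeff (Qp h) m * (1 - s ^ m) * (h / (1 - exp (- (h * real m)))))"

lemma qpow: "exp (- h) powr z = exp (- (h * z))" for h z :: real
  using exp_powr_real[of "- h" z] by simp

lemma fcd_eq:
  assumes N: "N > 0" and h: "h = lam / real N"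
  shows "fcd (exp (- lam / real N)) N c d p i y = Qf h (exp (- (h * y))) / Dd h"
proof -
  have q: "exp (- lam / real N) = exp (- h)" using h by simp
  have hN: "h * real N = lam" using h N by simp
  have lamE: "lam = h * real N" using hN by simp
  have e1: "exp (- h) powr ((c * real N + real d) * real (p - i) + real p * y) = be h * exp (- (h * y)) ^ p"
    unfolding be_def s_def
    unfolding qpow exp_powr_real exp_of_nat_mult[symmetric] mult_exp_exp lamE
    by (simp add: algebra_simps)
  have e2: "1 - exp (- h) powr (c * real N + real d + y - real i + real k) = 1 - al h k * exp (- (h * y))" for k
    unfolding al_def s_def
    unfolding qpow exp_powr_real mult_exp_exp lamE
    by (simp add: algebra_simps)
  have e3: "1 - exp (- h) powr (real (p - i) + y - real (p - i) + real k) = 1 - ga h k * exp (- (h * y))" for k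
    unfolding ga_def qpow by (simp add: exp_add[symmetric] algebra_simps)
  have e4: "1 - exp (- h) ^ k = 1 - exp (- (h * real k))" for k
    by (simp add: exp_of_nat_mult[symmetric] algebra_simps)
  have "fcd (exp (- lam / real N)) N c d p i y =
      (be h * exp (- (h * y)) ^ p) *
      ((\<Prod>k\<in>{1..i}. 1 - al h k * exp (- (h * y))) / (\<Prod>k\<in>{1..i}. 1 - exp (- (h * real k)))) *
      ((\<Prod>k\<in>{1..p-i}. 1 - ga h k * exp (- (h * y))) / (\<Prod>k\<in>{1..p-i}. 1 - exp (- (h * real k))))"
    unfolding fcd_def qbinom_def q e1 e2 e3 e4 prod_dividef ..
  also have "\<dots> = Qf h (exp (- (h * y))) / Dd h"
    unfolding Qf_def Dd_def by (simp add: field_simps)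
  finally show ?thesis .
qed

lemma sum_Qf:
  assumes N: "N > 0" and h: "h = lam / real N"
  shows "(\<Sum>j<N. Qf h (exp (- (h * real j)))) = (\<Sum>m\<in>{1..2*p}. coeff (Qp h) m * ((1 - s ^ m) / (1 - exp (- (h * real m)))))"
proof -
  have hpos: "h > 0" using h N lam by simp
  have hN: "h * real N = lam" using h N by simp
  have geo: "(\<Sum>j<N. exp (- (h * real j)) ^ m) = (1 - s ^ m) / (1 - exp (- (h * real m)))" if m: "m \<in> {1..2*p}" for m
  proof -
    have "exp (- (h * real j)) ^ m = exp (- (h * real m)) ^ j" for j
      by (simp add: exp_of_nat_mult[symmetric] algebra_simps)
    then have "(\<Sum>j<N. exp (- (h * real j)) ^ m) = (\<Sum>j<N. exp (- (h * real m)) ^ j)" by simp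
    also have "\<dots> = (1 - exp (- (h * real m)) ^ N) / (1 - exp (- (h * real m)))"
      using m hpos by (subst sum_gp_strict) auto
    also have "exp (- (h * real m)) ^ N = s ^ m"
      unfolding s_def by (simp add: exp_of_nat_mult[symmetric] hN[symmetric] algebra_simps)
    finally show ?thesis .
  qed
  have "(\<Sum>j<N. Qf h (exp (- (h * real j)))) = (\<Sum>j<N. \<Sum>m\<in>{1..2*p}. coeff (Qp h) m * exp (- (h * real j)) ^ m)"
    by (simp add: poly_Qp_sum)
  also have "\<dots> = (\<Sum>m\<in>{1..2*p}. coeff (Qp h) m * (\<Sum>j<N. exp (- (h * real j)) ^ m))"
    by (subst sum.swap) (simp add: sum_distrib_left)
  also have "\<dots> = (\<Sum>m\<in>{1..2*p}. coeff (Qp h) m * ((1 - s ^ m) / (1 - exp (- (h * real m)))))"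
    by (rule sum.cong) (simp_all add: geo)
  finally show ?thesis .
qed

lemma main_identity:
  assumes N: "N > 0" and h: "h = lam / real N"
  shows "(lam / real N) ^ (p + 1) * (fact i * fact (p - i)) * (\<Sum>j<N. fcd (exp (- lam / real N)) N c d p i (real j))
       = Wf h * Vf h"
proof -
  have hpos: "h > 0" using h N lam by simp
  have Dnz: "Dd h \<noteq> 0" unfolding Dd_def using hpos by (auto simp: prod_zero_iff)
  have "(\<Sum>j<N. fcd (exp (- lam / real N)) N c d p i (real j)) = (\<Sum>j<N. Qf h (exp (- (h * real j)))) / Dd h"
    using fcd_eq[OF N h] by (simp add: sum_divide_distrib)
  also have "\<dots> = (\<Sum>m\<in>{1..2*p}. coeff (Qp h) m * ((1 - s ^ m) / (1 - exp (- (h * real m))))) / Dd h"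
    using sum_Qf[OF N h] by simp
  finally have S: "(\<Sum>j<N. fcd (exp (- lam / real N)) N c d p i (real j)) =
     (\<Sum>m\<in>{1..2*p}. coeff (Qp h) m * ((1 - s ^ m) / (1 - exp (- (h * real m))))) / Dd h" .
  have W: "Wf h = (h ^ i * fact i) * (h ^ (p - i) * fact (p - i)) / Dd h"
    unfolding Wf_def Dd_def prod_dividef prod_h_k by simp
  have V: "Vf h = h * (\<Sum>m\<in>{1..2*p}. coeff (Qp h) m * ((1 - s ^ m) / (1 - exp (- (h * real m)))))"
    unfolding Vf_def sum_distrib_left by (rule sum.cong) auto
  have hp: "h ^ (p + 1) = h ^ i * h ^ (p - i) * h" using ip by (simp add: power_add[symmetric])
  show ?thesis unfolding S W V h[symmetric] hp using Dnz by (simp add: field_simps)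
qed

end


lemma sexp_diff: "sexp f a b \<Longrightarrow> sexp g c e \<Longrightarrow> sexp (\<lambda>h. f h - g h) (a - c) (b - e)"
proof -
  assume f: "sexp f a b" and g: "sexp g c e"
  have "sexp (\<lambda>h. -1) (-1) 0" by (rule sexp_const)
  from sexp_mult[OF this g] have "sexp (\<lambda>h. - 1 * g h) (- 1 * c) (- 1 * e + 0 * c)" .
  from sexp_add[OF f this] show ?thesis by (rule sexp_cong) auto
qed

lemma integral_exp_pow:
  assumes lam: "lam > 0" and m: "m \<ge> 1"
  shows "integral {0..1} (\<lambda>t::real. exp (- (lam * t)) ^ m) = (1 - exp (- lam) ^ m) / (lam * real m)"
proof -
  have lm: "lam * real m > 0" using lam m by simp
  have eq: "exp (- (lam * t)) ^ m = exp (- (lam * real m * t))" for t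
    by (simp add: exp_of_nat_mult[symmetric] algebra_simps)
  have "((\<lambda>t. exp (- (lam * real m * t))) has_integral
      ((- exp (- (lam * real m * 1)) / (lam * real m)) - (- exp (- (lam * real m * 0)) / (lam * real m)))) {0..1}"
  proof (rule fundamental_theorem_of_calculus)
    fix t :: real assume "t \<in> {0..1}"
    have "((\<lambda>t. - exp (- (lam * real m * t)) / (lam * real m)) has_real_derivative exp (- (lam * real m * t))) (at t)"
      using lm m by (auto intro!: derivative_eq_intros simp: field_simps)
    then show "((\<lambda>t. - exp (- (lam * real m * t)) / (lam * real m)) has_vector_derivative exp (- (lam * real m * t))) (at t within {0..1})"
      by (simp add: has_real_derivative_iff_has_vector_derivative has_vector_derivative_at_within)
  qed simp
  then have "integral {0..1} (\<lambda>t. exp (- (lam * real m * t))) = (1 - exp (- (lam * real m))) / (lam * real m)"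
    using m by (simp add: integral_unique diff_divide_distrib)
  moreover have "exp (- lam) ^ m = exp (- (lam * real m))"
    by (simp add: exp_of_nat_mult[symmetric] algebra_simps)
  ultimately show ?thesis unfolding eq by simp
qed

context LL
begin

definition J :: "real \<Rightarrow> real" where "J h = integral {0..1} (\<lambda>t. Qf h (exp (- (lam * t))))"
definition K :: "real \<Rightarrow> real" where "K h = Qf h 1 - Qf h s"
definition rho :: "real \<Rightarrow> nat \<Rightarrow> real" where "rho h m = h / (1 - exp (- (h * real m))) - 1 / real m - h / 2"
definition R :: "real \<Rightarrow> real" where "R h = (\<Sum>m\<in>{1..2*p}. coeff (Qp h) m * (1 - s ^ m) * rho h m)"

lemma cont_Qf: "continuous_on {0..1} (\<lambda>t. Qf h (exp (- (lam * t))))"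
  unfolding poly_Qp[symmetric] by (intro continuous_intros)

lemma Vf_split:
  assumes h: "h > 0"
  shows "Vf h = lam * J h + h * (1/2) * K h + R h"
proof -
  define a where "a m = coeff (Qp h) m" for m
  have int: "lam * J h = (\<Sum>m\<in>{1..2*p}. a m * (1 - s ^ m) / real m)"
  proof -
    have "J h = integral {0..1} (\<lambda>t. \<Sum>m\<in>{1..2*p}. a m * exp (- (lam * t)) ^ m)"
      unfolding J_def a_def poly_Qp_sum ..
    also have "\<dots> = (\<Sum>m\<in>{1..2*p}. integral {0..1} (\<lambda>t. a m * exp (- (lam * t)) ^ m))"
      by (rule integral_sum) (auto intro!: integrable_continuous_real continuous_intros)
    also have "\<dots> = (\<Sum>m\<in>{1..2*p}. a m * ((1 - s ^ m) / (lam * real m)))"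
      by (rule sum.cong) (use lam in \<open>auto simp: integral_exp_pow s_def\<close>)
    finally have "lam * J h = (\<Sum>m\<in>{1..2*p}. lam * (a m * ((1 - s ^ m) / (lam * real m))))"
      by (simp add: sum_distrib_left)
    also have "\<dots> = (\<Sum>m\<in>{1..2*p}. a m * (1 - s ^ m) / real m)"
      by (rule sum.cong) (use lam in auto)
    finally show ?thesis .
  qed
  have k: "K h = (\<Sum>m\<in>{1..2*p}. a m * (1 - s ^ m))"
    unfolding K_def a_def poly_Qp_sum by (simp add: sum_subtractf[symmetric] algebra_simps)
  have "Vf h = (\<Sum>m\<in>{1..2*p}. a m * (1 - s ^ m) / real m + h * (1/2) * (a m * (1 - s ^ m)) + a m * (1 - s ^ m) * rho h m)"
    unfolding Vf_def a_def[symmetric] rho_def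
  proof (rule sum.cong)
    fix m assume m: "m \<in> {1..2*p}"
    then have "h * real m > 0" using h by simp
    then have "exp (- (h * real m)) < 1" by simp
    then have e: "1 - exp (- (h * real m)) \<noteq> 0" by linarith
    have "real m \<noteq> 0" using m by simp
    then show "a m * (1 - s ^ m) * (h / (1 - exp (- (h * real m)))) =
      a m * (1 - s ^ m) / real m + h * (1 / 2) * (a m * (1 - s ^ m)) +
      a m * (1 - s ^ m) * (h / (1 - exp (- (h * real m))) - 1 / real m - h / 2)"
      using e by (simp add: field_simps)
  qed simp
  also have "\<dots> = lam * J h + h * (1/2) * K h + R h"
    unfolding int k R_def a_def[symmetric] by (simp add: sum.distrib sum_distrib_left)
  finally show ?thesis .
qed

lemma cont_Q1: "continuous_on {0..1} (\<lambda>t. Q1 (exp (- (lam * t))))"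
  unfolding Q1_def by (intro continuous_intros)

lemma sexp_J: "sexp J (integral {0..1} (\<lambda>t. Q0 (exp (- (lam * t))))) (integral {0..1} (\<lambda>t. Q1 (exp (- (lam * t)))))"
proof -
  have sub: "(\<lambda>t. exp (- (lam * t))) ` {0..1} \<subseteq> {0..1}" using lam by auto
  have u: "uexp {0..1} (\<lambda>h t. Qf h (exp (- (lam * t)))) (\<lambda>t. Q0 (exp (- (lam * t)))) (\<lambda>t. Q1 (exp (- (lam * t))))"
    by (rule uexp_compose[OF uexp_Qf sub])
  have c0: "continuous_on {0..1} (\<lambda>t. Q0 (exp (- (lam * t))))"
    using cont_Qf[of 0] unfolding Qf0 .
  show ?thesis unfolding J_def
    by (rule uexp_integral[OF u cont_Qf c0 cont_Q1])
qed

lemma sexp_K: "sexp K (Q0 1 - Q0 s) (Q1 1 - Q1 s)"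
  unfolding K_def
  by (rule sexp_diff; rule uexp_point[OF uexp_Qf]) (use s_pos s_less1 in auto)

lemma sexp_rho: "m \<ge> 1 \<Longrightarrow> sexp (\<lambda>h. rho h m) 0 0"
proof -
  assume m: "m \<ge> 1"
  have "uexp (UNIV::unit set) (\<lambda>h x. (h * real m) / (1 - exp (- (h * real m)))) (\<lambda>_. 1) (\<lambda>_. real m / 2)"
    using m by (intro uexp_w_atom) simp
  then have w: "sexp (\<lambda>h. (h * real m) / (1 - exp (- (h * real m)))) 1 (real m / 2)"
    unfolding sexp_uexp .
  from sexp_mult[OF sexp_const[of "1 / real m"] w]
  have "sexp (\<lambda>h. 1 / real m * ((h * real m) / (1 - exp (- (h * real m))))) (1 / real m * 1) (1 / real m * (real m / 2) + 0 * 1)" .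
  from sexp_diff[OF this sexp_add[OF sexp_const[of "1 / real m"] sexp_id[of "1/2"]]]
  show ?thesis
    by (rule sexp_cong) (use m in \<open>auto simp: rho_def field_simps\<close>)
qed

lemma sexp_sum: "finite A \<Longrightarrow> (\<And>m. m \<in> A \<Longrightarrow> sexp (f m) (a m) (b m)) \<Longrightarrow>
   sexp (\<lambda>h. \<Sum>m\<in>A. f m h) (\<Sum>m\<in>A. a m) (\<Sum>m\<in>A. b m)"
proof (induction A rule: finite_induct)
  case empty
  then show ?case using sexp_const[of 0] by simp
next
  case (insert x F)
  from sexp_add[OF insert.prems[of x] insert.IH] insert show ?case by simp
qed

lemma sexp_R: "sexp R 0 0"
proof -
  have "sexp (\<lambda>h. \<Sum>m\<in>{1..2*p}. coeff (Qp h) m * (1 - s ^ m) * rho h m) (\<Sum>m\<in>{1..2*p}. 0) (\<Sum>m\<in>{1..2*p}. 0)"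
  proof (rule sexp_sum)
    fix m assume m: "m \<in> {1..2*p}"
    have b: "\<forall>\<^sub>F h in at_right 0. \<bar>coeff (Qp h) m * (1 - s ^ m)\<bar> \<le> Mc * 1"
      using ev_small
    proof eventually_elim
      case (elim h)
      have "\<bar>1 - s ^ m\<bar> \<le> 1" using s_pos s_less1 by (simp add: power_le_one)
      then show ?case using abs_mult_le[OF coeff_Qp_bound[of h m] \<open>\<bar>1 - s ^ m\<bar> \<le> 1\<close>] elim by simp
    qed
    show "sexp (\<lambda>h. coeff (Qp h) m * (1 - s ^ m) * rho h m) 0 0"
      using sexp_bounded_mult[OF b sexp_rho] m by simp
  qed simp
  then show ?thesis unfolding R_def by simp
qed

end


lemma sum_id_real: "(\<Sum>k\<in>{1..n}. real k) = real n * (real n + 1) / 2"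
  by (induction n) (simp_all add: algebra_simps)

lemma integral_lin3:
  fixes f g k :: "real \<Rightarrow> real"
  assumes "f integrable_on S" "g integrable_on S" "k integrable_on S"
  shows "integral S (\<lambda>t. a * f t + b * g t + e * k t) = a * integral S f + b * integral S g + e * integral S k"
proof -
  have i: "(\<lambda>t. a * f t) integrable_on S" "(\<lambda>t. b * g t) integrable_on S" "(\<lambda>t. e * k t) integrable_on S"
    using assms by (auto intro: integrable_on_mult_right)
  have "integral S (\<lambda>t. a * f t + b * g t + e * k t) = integral S (\<lambda>t. a * f t + b * g t) + integral S (\<lambda>t. e * k t)"
    by (rule integral_add) (use i in \<open>auto intro: integrable_add\<close>)
  also have "integral S (\<lambda>t. a * f t + b * g t) = integral S (\<lambda>t. a * f t) + integral S (\<lambda>t. b * g t)"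
    by (rule integral_add) (use i in auto)
  finally show ?thesis by simp
qed

context LL
begin

definition I0 where "I0 = integral {0..1} (\<lambda>t. Q0 (exp (- (lam * t))))"
definition I1 where "I1 = integral {0..1} (\<lambda>t. Q1 (exp (- (lam * t))))"
definition Si :: real where "Si = (\<Sum>k\<in>{1..i}. real k)"

lemma sexp_W: "sexp Wf 1 ((Si + Sg) / 2)"
proof -
  have pr: "uexp (UNIV::unit set) (\<lambda>h x. \<Prod>k\<in>{1..n}. (h * real k) / (1 - exp (- (h * real k))))
      (\<lambda>x. 1 ^ card {1..n}) (\<lambda>x. (\<Sum>k\<in>{1..n}. real k) * (1/2) * 1 ^ (card {1..n} - 1))" for n
  proof (rule uexp_prod_same)
    fix k assume k: "k \<in> {1..n}"
    have "uexp (UNIV::unit set) (\<lambda>h x. (h * real k) / (1 - exp (- (h * real k)))) (\<lambda>_. 1) (\<lambda>_. real k / 2)"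
      using k by (intro uexp_w_atom) simp
    then show "uexp (UNIV::unit set) (\<lambda>h x. (h * real k) / (1 - exp (- (h * real k)))) (\<lambda>_. 1) (\<lambda>x. real k * (1/2))"
      by (rule uexp_cong) auto
  qed simp
  have s1: "sexp (\<lambda>h. \<Prod>k\<in>{1..n}. (h * real k) / (1 - exp (- (h * real k)))) 1 ((\<Sum>k\<in>{1..n}. real k) / 2)" for n
    unfolding sexp_uexp using pr[of n] by (rule uexp_cong) auto
  from sexp_mult[OF s1[of i] s1[of "p - i"]] show ?thesis
    unfolding Wf_def Si_def Sg_def by (rule sexp_cong) (auto simp: field_simps)
qed

lemma sexp_V: "sexp Vf (lam * I0) (lam * I1 + (1/2) * (Q0 1 - Q0 s))"
proof -
  have a: "sexp (\<lambda>h. lam * J h) (lam * I0) (lam * I1 + 0 * I0)"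
    unfolding I0_def I1_def by (rule sexp_mult[OF sexp_const sexp_J])
  have b: "sexp (\<lambda>h. h * (1/2) * K h) (0 * (Q0 1 - Q0 s)) (0 * (Q1 1 - Q1 s) + (1/2) * (Q0 1 - Q0 s))"
    by (rule sexp_mult[OF sexp_id sexp_K])
  from sexp_add[OF sexp_add[OF a b] sexp_R] show ?thesis
    by (rule sexp_cong) (auto simp: Vf_split)
qed

lemma sexp_T: "sexp (\<lambda>h. Wf h * Vf h) (lam * I0) (lam * I1 + (1/2) * (Q0 1 - Q0 s) + (Si + Sg) / 2 * (lam * I0))"
  using sexp_mult[OF sexp_W sexp_V] by (rule sexp_cong) auto

lemma Sa_eq: "Sa = real i * (2 * real d - real i + 1) / 2"
proof -
  have "Sa = (\<Sum>k\<in>{1..i}. (real d - real i)) + (\<Sum>k\<in>{1..i}. real k)"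
    unfolding Sa_def by (simp add: sum.distrib)
  also have "\<dots> = real i * (real d - real i) + real i * (real i + 1) / 2"
    unfolding sum_id_real by simp
  finally show ?thesis by (simp add: field_simps)
qed

lemma Sg_eq: "Sg = real (p - i) * (real (p - i) + 1) / 2"
  unfolding Sg_def by (rule sum_id_real)

lemma Si_eq: "Si = real i * (real i + 1) / 2"
  unfolding Si_def by (rule sum_id_real)

lemma spow: "s powr t = exp (- (lam * t))" for t
  unfolding s_def by (simp add: exp_powr_real)

lemma spow_nat: "s powr (real n * t) = exp (- (lam * t)) ^ n" for t n
  unfolding s_def by (simp add: exp_powr_real exp_of_nat_mult[symmetric] algebra_simps)

lemma I0_eq: "I0 = A0 s c p i"
proof -
  have "Q0 (exp (- (lam * t))) = s powr (c * real (p - i)) *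
      (s powr (real p * t) * (1 - s powr t) ^ (p - i) * (1 - s powr (c + t)) ^ i)" for t
  proof -
    have e1: "s powr (real p * t) = exp (- (lam * t)) ^ p" by (rule spow_nat)
    have e2: "s powr t = exp (- (lam * t))" by (rule spow)
    have e3: "s powr (c + t) = s powr c * exp (- (lam * t))" by (simp add: powr_add spow)
    show ?thesis unfolding Q0_def e1 e2 e3 by (simp add: algebra_simps)
  qed
  then show ?thesis unfolding I0_def A0_def by simp
qed

lemma I1_eq: "I1 = - (real d * real (p - i)) * A0 s c p i + A1_1 s c d p i + A1_2 s c p i"
proof -
  define G0 where "G0 t = s powr (real p * t) * (1 - s powr t) ^ (p - i) * (1 - s powr (c + t)) ^ i" for t
  define G1 where "G1 t = s powr ((real p + 1) * t) * (1 - s powr t) ^ (p - i) * (1 - s powr (c + t)) ^ (i - 1)" for t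
  define G2 where "G2 t = s powr ((real p + 1) * t) * (1 - s powr t) ^ (p - i - 1) * (1 - s powr (c + t)) ^ i" for t
  let ?b0 = "s powr (c * real (p - i))"
  have pt: "Q1 (exp (- (lam * t))) = (- (real d * real (p - i)) * ?b0) * G0 t + (Sa * (?b0 * s powr c)) * G1 t + (Sg * ?b0) * G2 t" for t
  proof -
    have e1: "s powr (real p * t) = exp (- (lam * t)) ^ p" by (rule spow_nat)
    have e1': "s powr ((real p + 1) * t) = exp (- (lam * t)) * exp (- (lam * t)) ^ p"
      using spow_nat[of "Suc p" t] by (simp add: add.commute)
    have e2: "s powr t = exp (- (lam * t))" by (rule spow)
    have e3: "s powr (c + t) = s powr c * exp (- (lam * t))" by (simp add: powr_add spow)
    show ?thesis unfolding Q1_def G0_def G1_def G2_def e1 e1' e2 e3 by (simp add: algebra_simps)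
  qed
  have cG: "continuous_on {0..1} G0" "continuous_on {0..1} G1" "continuous_on {0..1} G2"
    unfolding G0_def G1_def G2_def using s_pos by (auto intro!: continuous_intros)
  then have iG: "G0 integrable_on {0..1}" "G1 integrable_on {0..1}" "G2 integrable_on {0..1}"
    by (auto intro: integrable_continuous_real)
  have "I1 = (- (real d * real (p - i)) * ?b0) * integral {0..1} G0 + (Sa * (?b0 * s powr c)) * integral {0..1} G1
      + (Sg * ?b0) * integral {0..1} G2"
    unfolding I1_def pt using iG by (rule integral_lin3)
  moreover have "A0 s c p i = ?b0 * integral {0..1} G0"
    unfolding A0_def G0_def ..
  moreover have "A1_1 s c d p i = Sa * (?b0 * s powr c) * integral {0..1} G1"
  proof -
    have "c * (real p - real i + 1) = c * real (p - i) + c" using ip by (simp add: of_nat_diff algebra_simps)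
    then have "s powr (c * (real p - real i + 1)) = ?b0 * s powr c" by (simp add: powr_add)
    then show ?thesis unfolding A1_1_def G1_def Sa_eq by (simp add: algebra_simps)
  qed
  moreover have "A1_2 s c p i = Sg * ?b0 * integral {0..1} G2"
    unfolding A1_2_def G2_def Sg_eq by (simp add: algebra_simps)
  ultimately show ?thesis by (simp add: algebra_simps)
qed

lemma Q0_one: "Q0 1 = (1 - s powr c) ^ p * (if i = p then 1 else 0)"
  unfolding Q0_def using ip s_pos by auto

lemma Q0_s: "Q0 s = s powr (real p + c * real (p - i)) * (1 - s powr (c + 1)) ^ i * (1 - s) ^ (p - i)"
proof -
  have "s ^ p = s powr real p" using s_pos by (simp add: powr_realpow)
  then show ?thesis unfolding Q0_def using s_pos by (simp add: powr_add algebra_simps)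
qed

lemma B0_eq: "B0 lam c p i = lam * I0"
  unfolding B0_def s_def[symmetric] I0_eq ..

lemma B1_eq: "B1 lam c d p i = lam * I1 + (1/2) * (Q0 1 - Q0 s) + (Si + Sg) / 2 * (lam * I0)"
proof -
  have rpi: "real (p - i) = real p - real i" using ip by (simp add: of_nat_diff)
  have A13: "A1_3 s c d p i = ((Si + Sg) / 2 - real d * real (p - i)) * A0 s c p i"
    unfolding A1_3_def Si_eq Sg_eq rpi by (simp add: field_simps power2_eq_square)
  show ?thesis
    unfolding B1_def Let_def s_def[symmetric] I1_eq I0_eq Q0_one Q0_s A13
    by (simp add: algebra_simps)
qed

lemma sexp_final: "sexp (\<lambda>h. Wf h * Vf h) (B0 lam c p i) (B1 lam c d p i)"
  unfolding B0_eq B1_eq by (rule sexp_T)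

end


lemma final_alg: "Y * X = 1 \<Longrightarrow> F \<noteq> 0 \<Longrightarrow> Sv = Y * (1 / F) * (X * F * Sv)" for Y X F Sv :: real
proof -
  assume a: "Y * X = 1" "F \<noteq> 0"
  have "Y * (1 / F) * (X * F * Sv) = (Y * X) * (F / F) * Sv" by (simp add: algebra_simps)
  also have "\<dots> = Sv" using a by simp
  finally show ?thesis by simp
qed

theorem lemma2p9:
  fixes c lam :: real and d p i :: nat
  assumes "c \<ge> 0" and "lam > 0" and "p \<ge> 1" and "i \<le> p"
  shows "\<exists>E :: nat \<Rightarrow> real. E \<in> O(\<lambda>N. 1 / (real N)^2) \<and>
    (\<forall>\<^sub>F N in sequentially.
       (\<Sum>j<N. fcd (exp (- lam / real N)) N c d p i (real j))
       = (real N / lam) ^ (p + 1) * (1 / (fact i * fact (p - i)))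
         * (B0 lam c p i + B1 lam c d p i * (lam / real N) + E N))"
proof -
  interpret L: LL c lam d p i using assms by unfold_locales
  from L.sexp_final obtain C where C:
    "\<forall>\<^sub>F h in at_right 0. \<bar>L.Wf h * L.Vf h - B0 lam c p i - h * B1 lam c d p i\<bar> \<le> C * h^2"
    unfolding sexp_def by blast
  have lim: "filterlim (\<lambda>N. lam / real N) (at_right 0) sequentially"
    unfolding filterlim_at
  proof
    show "\<forall>\<^sub>F N in sequentially. lam / real N \<in> {0<..} \<and> lam / real N \<noteq> 0"
      using eventually_gt_at_top[of "0::nat"] by eventually_elim (use assms in auto)
    show "((\<lambda>N. lam / real N) \<longlongrightarrow> 0) sequentially" by (rule lim_const_over_n)
  qed
  have evN: "\<forall>\<^sub>F N in sequentially. \<bar>L.Wf (lam / real N) * L.Vf (lam / real N) - B0 lam c p i - (lam / real N) * B1 lam c d p i\<bar>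
      \<le> C * (lam / real N)^2"
    using eventually_compose_filterlim[OF C lim] by simp
  define S where "S N = (\<Sum>j<N. fcd (exp (- lam / real N)) N c d p i (real j))" for N
  define E where "E N = (lam / real N) ^ (p + 1) * (fact i * fact (p - i)) * S N - B0 lam c p i - B1 lam c d p i * (lam / real N)" for N
  show ?thesis
  proof (intro exI[of _ E] conjI)
    have "\<forall>\<^sub>F N in sequentially. norm (E N) \<le> (\<bar>C\<bar> * lam^2) * norm (1 / (real N)^2)"
      using evN eventually_gt_at_top[of "0::nat"]
    proof eventually_elim
      case (elim N)
      have "E N = L.Wf (lam / real N) * L.Vf (lam / real N) - B0 lam c p i - (lam / real N) * B1 lam c d p i"
        unfolding E_def S_def using L.main_identity[OF elim(2) refl] by (simp add: algebra_simps)
      then have "\<bar>E N\<bar> \<le> C * (lam / real N)^2" using elim(1) by simp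
      also have "\<dots> \<le> \<bar>C\<bar> * (lam / real N)^2" by (rule mult_right_mono) auto
      also have "\<dots> = (\<bar>C\<bar> * lam^2) * (1 / (real N)^2)" by (simp add: power_divide)
      finally show ?case by simp
    qed
    then show "E \<in> O(\<lambda>N. 1 / (real N)^2)" by (rule bigoI)
    show "\<forall>\<^sub>F N in sequentially. (\<Sum>j<N. fcd (exp (- lam / real N)) N c d p i (real j))
       = (real N / lam) ^ (p + 1) * (1 / (fact i * fact (p - i)))
         * (B0 lam c p i + B1 lam c d p i * (lam / real N) + E N)"
      using eventually_gt_at_top[of "0::nat"]
    proof eventually_elim
      case (elim N)
      have "B0 lam c p i + B1 lam c d p i * (lam / real N) + E N = (lam / real N) ^ (p + 1) * (fact i * fact (p - i)) * S N"
        unfolding E_def by simp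
      moreover have "(real N / lam) ^ (p + 1) * (lam / real N) ^ (p + 1) = 1"
      proof -
        have "(real N / lam) * (lam / real N) = 1" using elim assms by simp
        then show ?thesis by (metis power_mult_distrib power_one)
      qed
      moreover have "(fact i * fact (p - i) :: real) \<noteq> 0" by simp
      ultimately show ?case unfolding S_def[symmetric]
        using final_alg[of "(real N / lam) ^ (p + 1)" "(lam / real N) ^ (p + 1)" "fact i * fact (p - i)" "S N"]
        by simp
    qed
  qed
qed


end
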